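(* Let $m\ge1$, $p\ge0$ be integers and $\alpha$ a positive common divisor of $m$ and $p$. Then $\Lambda^{(\alpha)}(m,p)$ is a finite set and its cardinality is divisible by $m/\alpha$.
   Context: $\Lambda(m,p)=\{(\lambda_i)_{i\in\mathbb Z}: \lambda_i\in\mathbb Z,\ \lambda_1=0,\ \lambda_i\le\lambda_{i+1},\ \lambda_{i+m}=\lambda_i+p \text{ for all } i\}$. For a positive common divisor $\alpha$ of $m$ and $p$ (every positive integer divides $0$), $\Lambda^{(\alpha)}(m,p)=\{\lambda\in\Lambda(m/\alpha,p/\alpha): \lambda\notin\Lambda(m/\alpha',p/\alpha') \text{ for every common divisor } \alpha'>\alpha \text{ of } m,p\}$. *)

theory Defs
  imports Main
begin

definition Lambda :: "nat \<Rightarrow> nat \<Rightarrow> (int \<Rightarrow> int) set" where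
  "Lambda m p = {lam. lam 1 = 0 \<and> (\<forall>i. lam i \<le> lam (i + 1))
                     \<and> (\<forall>i. lam (i + int m) = lam i + int p)}"

definition LambdaAlpha :: "nat \<Rightarrow> nat \<Rightarrow> nat \<Rightarrow> (int \<Rightarrow> int) set" where
  "LambdaAlpha \<alpha> m p = {lam \<in> Lambda (m div \<alpha>) (p div \<alpha>).
      \<forall>\<alpha>'. \<alpha>' dvd m \<and> \<alpha>' dvd p \<and> \<alpha>' > \<alpha> \<longrightarrow> lam \<notin> Lambda (m div \<alpha>') (p div \<alpha>')}"

end

theory Submission
  imports Defs
begin

definition shft :: "int \<Rightarrow> (int \<Rightarrow> int) \<Rightarrow> int \<Rightarrow> int" where
  "shft k f = (\<lambda>i. f (i + k) - f (1 + k))"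

lemma shft_shft: "shft a (shft b f) = shft (a + b) f"
  by (rule ext) (simp add: shft_def algebra_simps)

lemma shft_0: "f 1 = 0 \<Longrightarrow> shft 0 f = f"
  by (rule ext) (simp add: shft_def)

lemma shft_Lambda: "f \<in> Lambda n q \<Longrightarrow> shft k f \<in> Lambda n q"
  unfolding Lambda_def shft_def
proof (clarify, intro conjI allI)
  fix i assume H: "\<forall>i. f i \<le> f (i + 1)" "\<forall>i. f (i + int n) = f i + int q"
  show "f (i + k) - f (1 + k) \<le> f (i + 1 + k) - f (1 + k)"
    using H(1)[rule_format, of "i+k"] by (simp add: algebra_simps)
  show "f (i + int n + k) - f (1 + k) = f (i + k) - f (1 + k) + int q"
    using H(2)[rule_format, of "i+k"] by (simp add: algebra_simps)
qed simp

lemma shft_Lambda_rev: "shft k f \<in> Lambda n q \<Longrightarrow> f 1 = 0 \<Longrightarrow> f \<in> Lambda n q"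
  using shft_Lambda[of "shft k f" n q "-k"] by (simp add: shft_shft shft_0)

lemma Lambda_per_nat: "f \<in> Lambda n q \<Longrightarrow> f (i + int k * int n) = f i + int k * int q"
proof (induction k)
  case (Suc k)
  then have "f (i + int k * int n + int n) = f (i + int k * int n) + int q"
    unfolding Lambda_def by blast
  then show ?case using Suc by (simp add: algebra_simps)
qed simp

lemma Lambda_per: "f \<in> Lambda n q \<Longrightarrow> f (i + k * int n) = f i + k * int q"
proof (cases "k \<ge> 0")
  case True
  assume f: "f \<in> Lambda n q"
  then show ?thesis using Lambda_per_nat[OF f, of i "nat k"] True by simp
next
  case False
  assume f: "f \<in> Lambda n q"
  have "f (i + k * int n + int (nat (-k)) * int n) = f (i + k * int n) + int (nat (-k)) * int q"
    by (rule Lambda_per_nat[OF f])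
  then show ?thesis using False by (simp add: algebra_simps)
qed

lemma Lambda_mono_nat: "f \<in> Lambda n q \<Longrightarrow> f i \<le> f (i + int d)"
proof (induction d)
  case (Suc d)
  then have "f (i + int d) \<le> f (i + int d + 1)" unfolding Lambda_def by blast
  then show ?case using Suc by (simp add: algebra_simps)
qed simp

lemma Lambda_mono: "f \<in> Lambda n q \<Longrightarrow> i \<le> j \<Longrightarrow> f i \<le> f j"
  using Lambda_mono_nat[of f n q i "nat (j - i)"] by simp

lemma Lambda_finite:
  assumes "n \<ge> 1" shows "finite (Lambda n q)"
proof -
  let ?F = "\<lambda>f. map f [1..int n]"
  have inj: "inj_on ?F (Lambda n q)"
  proof (rule inj_onI)
    fix f g assume f: "f \<in> Lambda n q" and g: "g \<in> Lambda n q" and e: "?F f = ?F g"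
    have fg: "f r = g r" if "1 \<le> r" "r \<le> int n" for r
    proof -
      have "r \<in> set [1..int n]" using that by simp
      then show ?thesis using e by (metis (no_types, lifting) map_eq_conv)
    qed
    show "f = g"
    proof
      fix i
      define r where "r = (i - 1) mod int n + 1"
      define k where "k = (i - 1) div int n"
      have i: "i = r + k * int n" unfolding r_def k_def
        by (metis add.commute diff_add_cancel mod_div_mult_eq add.assoc)
      have "1 \<le> r" "r \<le> int n" unfolding r_def using assms pos_mod_bound[of "int n" "i - 1"] pos_mod_sign[of "int n" "i - 1"] by linarith+
      then show "f i = g i" using i Lambda_per[OF f, of r k] Lambda_per[OF g, of r k] fg by simp
    qed
  qed
  have sub: "?F ` Lambda n q \<subseteq> {xs. set xs \<subseteq> {0..int q} \<and> length xs = n}"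
  proof clarify
    fix f assume f: "f \<in> Lambda n q"
    have "f 1 = 0" using f unfolding Lambda_def by blast
    moreover have "f (1 + 1 * int n) = f 1 + 1 * int q" by (rule Lambda_per[OF f])
    ultimately have top: "f (1 + int n) = int q" by simp
    show "set (?F f) \<subseteq> {0..int q} \<and> length (?F f) = n"
    proof
      show "set (?F f) \<subseteq> {0..int q}"
      proof
        fix x assume "x \<in> set (?F f)"
        then obtain r where r: "1 \<le> r" "r \<le> int n" "x = f r" by auto
        have "f 1 \<le> f r" "f r \<le> f (1 + int n)" using Lambda_mono[OF f] r by auto
        then show "x \<in> {0..int q}" using r \<open>f 1 = 0\<close> top by simp
      qed
    qed simp
  qed
  have "finite (?F ` Lambda n q)"
    by (rule finite_subset[OF sub finite_lists_length_eq]) simp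
  then show ?thesis using finite_image_iff[OF inj] by blast
qed

lemma shft_inv: "f 1 = 0 \<Longrightarrow> shft k f = f \<Longrightarrow> shft (-k) f = f"
  by (metis add.left_inverse shft_0 shft_shft)

lemma shft_add: "shft a f = f \<Longrightarrow> shft b f = f \<Longrightarrow> shft (a + b) f = f"
  by (metis shft_shft)

lemma shft_mult_nat: "f 1 = 0 \<Longrightarrow> shft d f = f \<Longrightarrow> shft (int k * d) f = f"
proof (induction k)
  case 0 then show ?case by (simp add: shft_0)
next
  case (Suc k)
  then have "shft (d + int k * d) f = f" using shft_add by blast
  then show ?case by (simp add: algebra_simps)
qed

lemma shft_mult: "f 1 = 0 \<Longrightarrow> shft d f = f \<Longrightarrow> shft (k * d) f = f"
proof (cases "k \<ge> 0")
  case True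
  assume "f 1 = 0" "shft d f = f"
  then show ?thesis using shft_mult_nat[of f d "nat k"] True by simp
next
  case False
  assume a: "f 1 = 0" "shft d f = f"
  then have "shft (int (nat (-k)) * d) f = f" by (rule shft_mult_nat)
  then have "shft (- (int (nat (-k)) * d)) f = f" using a shft_inv by blast
  then show ?thesis using False by simp
qed

lemma shft_per: "f \<in> Lambda n q \<Longrightarrow> shft (a + k * int n) f = shft a f"
  unfolding shft_def
proof (rule ext)
  fix i assume f: "f \<in> Lambda n q"
  show "f (i + (a + k * int n)) - f (1 + (a + k * int n)) = f (i + a) - f (1 + a)"
    using Lambda_per[OF f, of "i + a" k] Lambda_per[OF f, of "1 + a" k] by (simp add: algebra_simps)
qed

theorem mainTheorem5:
  fixes m p \<alpha> :: nat
  assumes "m \<ge> 1" and "\<alpha> > 0" and "\<alpha> dvd m" and "\<alpha> dvd p"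
  shows "finite (LambdaAlpha \<alpha> m p) \<and> (m div \<alpha>) dvd card (LambdaAlpha \<alpha> m p)"
proof -
  define n where "n = m div \<alpha>"
  define q where "q = p div \<alpha>"
  have m: "m = \<alpha> * n" and p: "p = \<alpha> * q" using assms unfolding n_def q_def by auto
  have n1: "n \<ge> 1" using assms m by (cases n) auto
  define S where "S = LambdaAlpha \<alpha> m p"
  have S_def': "S = {f \<in> Lambda n q. \<forall>\<alpha>'. \<alpha>' dvd m \<and> \<alpha>' dvd p \<and> \<alpha>' > \<alpha> \<longrightarrow> f \<notin> Lambda (m div \<alpha>') (p div \<alpha>')}"
    unfolding S_def LambdaAlpha_def n_def q_def by simp
  have finS: "finite S" unfolding S_def' using Lambda_finite[OF n1, of q] by (rule rev_finite_subset) auto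
  have f1: "f 1 = 0" if "f \<in> S" for f using that unfolding S_def' Lambda_def by blast
  have inv: "shft k f \<in> S" if "f \<in> S" for f k
    using that f1[OF that] shft_Lambda shft_Lambda_rev unfolding S_def' by blast
  have free: False if f: "f \<in> S" and d: "0 < d" "d < n" and e: "shft (int d) f = f" for f d
  proof -
    have fL: "f \<in> Lambda n q" using f unfolding S_def' by blast
    define g where "g = gcd d n"
    obtain u v where uv: "u * int d + v * int n = int g"
      using bezout_int[of "int d" "int n"] unfolding g_def by auto
    have "shft (u * int d) f = f" using shft_mult[OF f1[OF f] e] .
    moreover have "shft (u * int d + v * int n) f = shft (u * int d) f" by (rule shft_per[OF fL])
    ultimately have eg: "shft (int g) f = f" using uv by simp
    have g0: "g > 0" using d unfolding g_def by simp
    have gd: "g \<le> d" using d unfolding g_def by (simp add: gcd_le1_nat)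
    have gn: "g dvd n" unfolding g_def by simp
    then obtain t where t: "n = g * t" by blast
    define c where "c = f (1 + int g)"
    have c0: "c \<ge> 0" unfolding c_def using Lambda_mono[OF fL, of 1 "1 + int g"] f1[OF f] by simp
    have step: "f (i + int g) = f i + c" for i
      using fun_cong[OF eg, of i] f1[OF f] unfolding shft_def c_def by (simp add: algebra_simps)
    have fg: "f \<in> Lambda g (nat c)" using fL c0 step unfolding Lambda_def by auto
    have "f (1 + int t * int g) = f 1 + int t * int (nat c)" by (rule Lambda_per[OF fg])
    moreover have "f (1 + 1 * int n) = f 1 + 1 * int q" by (rule Lambda_per[OF fL])
    ultimately have "int q = int t * c" using t f1[OF f] c0 by (simp add: algebra_simps)
    then have "int q = int (t * nat c)" using c0 by simp
    then have qt: "q = t * nat c" by (simp only: of_nat_eq_iff)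
    have "t \<noteq> 0" using t d by (metis mult_0_right not_less_zero)
    moreover have "t \<noteq> 1" using t gd d by auto
    ultimately have t2: "t \<ge> 2" by linarith
    define a' where "a' = \<alpha> * t"
    have md: "m = a' * g" unfolding a'_def using m t by simp
    have pd: "p = a' * nat c" unfolding a'_def using p qt by simp
    have a'pos: "a' > 0" unfolding a'_def using assms t2 by simp
    have "a' dvd m" "a' dvd p" using md pd by auto
    moreover have "a' > \<alpha>" unfolding a'_def using assms t2 by simp
    moreover have "m div a' = g" "p div a' = nat c" using md pd a'pos by auto
    ultimately have "f \<notin> Lambda g (nat c)" using f unfolding S_def' by auto
    then show False using fg by blast
  qed
  define orb where "orb f = range (\<lambda>k. shft k f)" for f
  have orb_eq: "orb f = (\<lambda>k. shft k f) ` {0..<int n}" if f: "f \<in> S" for f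
  proof -
    have fL: "f \<in> Lambda n q" using f unfolding S_def' by blast
    have "shft k f \<in> (\<lambda>k. shft k f) ` {0..<int n}" for k
    proof -
      have "shft (k mod int n + (k div int n) * int n) f = shft (k mod int n) f" by (rule shft_per[OF fL])
      moreover have "k mod int n \<in> {0..<int n}" using n1 by simp
      ultimately show ?thesis by (metis image_eqI mod_div_mult_eq)
    qed
    then show ?thesis unfolding orb_def by auto
  qed
  have orb_card: "card (orb f) = n" if f: "f \<in> S" for f
  proof -
    have "inj_on (\<lambda>k. shft k f) {0..<int n}"
    proof (rule inj_onI, rule ccontr)
      fix a b assume a: "a \<in> {0..<int n}" and b: "b \<in> {0..<int n}" and e: "shft a f = shft b f" and ne: "a \<noteq> b"
      have gen: False if "x \<in> {0..<int n}" "y \<in> {0..<int n}" "shft x f = shft y f" "x < y" for x y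
      proof -
        have "shft (-x) (shft x f) = shft (-x) (shft y f)" using that(3) by simp
        then have "shft (-x + x) f = shft (-x + y) f" by (simp only: shft_shft)
        then have "shft (y - x) f = f" using f1[OF f] by (simp add: shft_0)
        then have "shft (int (nat (y - x))) f = f" using that(4) by simp
        moreover have "0 < nat (y - x)" "nat (y - x) < n" using that by auto
        ultimately show False using free[OF f, of "nat (y - x)"] by blast
      qed
      show False using gen[OF a b e] gen[OF b a e[symmetric]] ne by linarith
    qed
    then show ?thesis using orb_eq[OF f] by (simp add: card_image)
  qed
  have orb_sub: "orb f \<subseteq> S" if "f \<in> S" for f using inv[OF that] unfolding orb_def by auto
  have orb_self: "f \<in> orb f" if "f \<in> S" for f
    unfolding orb_def using shft_0[of f, OF f1[OF that]] by (metis rangeI)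
  have orb_disj: "orb f = orb g" if f: "f \<in> S" and g: "g \<in> S" and h: "orb f \<inter> orb g \<noteq> {}" for f g
  proof -
    obtain a b where ab: "shft a f = shft b g" using h unfolding orb_def by auto
    have "shft (-b) (shft a f) = shft (-b) (shft b g)" using ab by simp
    then have gf: "g = shft (a - b) f" using f1[OF g] by (simp add: shft_shft shft_0)
    show ?thesis
    proof
      show "orb g \<subseteq> orb f" unfolding orb_def gf by (auto simp: shft_shft)
      show "orb f \<subseteq> orb g"
      proof
        fix x assume "x \<in> orb f"
        then obtain k where "x = shft k f" unfolding orb_def by auto
        then have "x = shft (k - (a - b)) g" by (simp add: gf shft_shft)
        then show "x \<in> orb g" unfolding orb_def by auto
      qed
    qed
  qed
  have U: "\<Union> (orb ` S) = S" using orb_sub orb_self by blast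
  have "n * card (orb ` S) = card (\<Union> (orb ` S))"
  proof (rule card_partition)
    show "c1 \<inter> c2 = {}" if "c1 \<in> orb ` S" "c2 \<in> orb ` S" "c1 \<noteq> c2" for c1 c2
      using orb_disj that by blast
  qed (use finS U orb_card in auto)
  then have "n dvd card S" using U by (metis dvd_triv_left)
  then show ?thesis using finS unfolding S_def n_def by simp
qed

end
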